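(* Let $k$ be a positive integer, $a=6k+5$, $b=a+\frac{a-3}{2}$, $c=b+1$, $S=\{a,b,c\}$, $G=\langle S\rangle$. For $i\in[0,k]$ let $A_{i,k}=([a,a+3i]\cup[b,b+1+3i]\cup[2a,2a+3i])+\{2ib\}$, $B_{i,k}=([a,a+1+3i]\cup[b,b+3+3i]\cup[2a,2a+1+3i])+\{(2i+1)b\}$, $I_{i,k}=A_{i,k}\cup B_{i,k}$; let $C=[2a+2kb,\infty[$ and $H_{13,k}=\{0\}\cup\bigcup_{i=0}^{k}I_{i,k}\cup C$. Then: (1) $H_{13,k}$ is a co-finite submonoid of $G$ containing $S$; (2) $H_{13,k}$ is a $3$-permutation numerical semigroup.
   Context: $\mathbb{N}=\{0,1,2,\dots\}$. A numerical semigroup is a submonoid $G$ of $(\mathbb{N},+,0)$ with $\mathbb{N}\setminus G$ finite; $\langle S\rangle$ is the submonoid generated by $S$. Writing the elements of a numerical semigroup as $0=g_0<g_1<g_2<\cdots$, it is an $n$-permutation numerical semigroup if it is generated by $\{g_1,\dots,g_n\}$ and for every $k\in\mathbb{N}$ the tuple $(g_{kn+1}\bmod n,\dots,g_{kn+n}\bmod n)$ contains exactly one representative of each residue class mod $n$. Notation: $[u,v]=\{x\in\mathbb{N}:u\le x\le v\}$, $[u,\infty[=\{x\in\mathbb{N}:x\ge u\}$; $X+Y=\{x+y:x\in X,y\in Y\}$. *)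

theory Defs
  imports Main "HOL-Library.Infinite_Set"
begin

definition submonoid :: "nat set \<Rightarrow> bool" where
  "submonoid M \<longleftrightarrow> 0 \<in> M \<and> (\<forall>x\<in>M. \<forall>y\<in>M. x + y \<in> M)"

definition gen :: "nat set \<Rightarrow> nat set" where
  "gen S = \<Inter>{M. submonoid M \<and> S \<subseteq> M}"

definition numerical_semigroup :: "nat set \<Rightarrow> bool" where
  "numerical_semigroup G \<longleftrightarrow> submonoid G \<and> finite (UNIV - G)"

definition setplus :: "nat set \<Rightarrow> nat set \<Rightarrow> nat set" (infixl "\<oplus>" 65) where
  "X \<oplus> Y = {x + y | x y. x \<in> X \<and> y \<in> Y}"

text \<open>Elements of G listed increasingly: g_j = enumerate G j (g_0 = 0).\<close>
definition perm_num_semigroup :: "nat \<Rightarrow> nat set \<Rightarrow> bool" where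
  "perm_num_semigroup n G \<longleftrightarrow> numerical_semigroup G
     \<and> G = gen {enumerate G j | j. 1 \<le> j \<and> j \<le> n}
     \<and> (\<forall>k. bij_betw (\<lambda>j. enumerate G (k * n + j) mod n) {1..n} {0..<n})"

definition aa :: "nat \<Rightarrow> nat" where "aa k = 6 * k + 5"
definition bb :: "nat \<Rightarrow> nat" where "bb k = aa k + (aa k - 3) div 2"
definition cc :: "nat \<Rightarrow> nat" where "cc k = bb k + 1"

definition A_set :: "nat \<Rightarrow> nat \<Rightarrow> nat set" where
  "A_set i k = ({aa k .. aa k + 3*i} \<union> {bb k .. bb k + 1 + 3*i} \<union> {2 * aa k .. 2 * aa k + 3*i})
      \<oplus> {2 * i * bb k}"

definition B_set :: "nat \<Rightarrow> nat \<Rightarrow> nat set" where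
  "B_set i k = ({aa k .. aa k + 1 + 3*i} \<union> {bb k .. bb k + 3 + 3*i} \<union> {2 * aa k .. 2 * aa k + 1 + 3*i})
      \<oplus> {(2 * i + 1) * bb k}"

definition I_set :: "nat \<Rightarrow> nat \<Rightarrow> nat set" where
  "I_set i k = A_set i k \<union> B_set i k"

definition H13 :: "nat \<Rightarrow> nat set" where
  "H13 k = {0} \<union> (\<Union>i\<in>{0..k}. I_set i k) \<union> {2 * aa k + 2 * k * bb k ..}"

end

theory Submission imports Defs begin


lemma abc: "aa k = 6*k+5" "bb k = 9*k+6" "cc k = 9*k+7"
  unfolding aa_def bb_def cc_def by simp_all

lemma setplus_single: "x \<in> X \<oplus> {t} \<longleftrightarrow> t \<le> x \<and> x - t \<in> X"
  unfolding setplus_def by force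

definition HQ :: "nat \<Rightarrow> nat \<Rightarrow> nat \<Rightarrow> bool" where
 "HQ k q r \<longleftrightarrow> (q = 0 \<and> r = 0) \<or> 2*k+2 \<le> q \<or> (q = 2*k+1 \<and> 3*k+4 \<le> r)
    \<or> (1 \<le> q \<and> r \<le> 3*q div 2) \<or> (1 \<le> q \<and> 3*k+4 \<le> r \<and> r \<le> 3*k+4 + 3*(q-1) div 2)
    \<or> (6*k+5 \<le> r \<and> r \<le> 6*k+5 + 3*q div 2)"

lemma divmod_pair:
  fixes b :: nat
  assumes "0<b" "u < 2*b"
  shows "(m*b+u) div b = (if u<b then m else Suc m) \<and> (m*b+u) mod b = (if u < b then u else u - b)"
proof (cases "u < b")
  case True thus ?thesis using assms by simp
next
  case False
  then have e: "m*b+u = (u-b) + Suc m * b" by simp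
  have "u - b < b" using assms False by simp
  have g: "(v + n*b) div b = n \<and> (v + n*b) mod b = v" if "v < b" for v n
    using that by simp
  have dm: "(m*b+u) div b = Suc m \<and> (m*b+u) mod b = u - b"
    unfolding e by (rule g) fact
  show ?thesis using False dm by simp
qed

lemma lex_lt_aux:
  fixes b :: nat
  assumes "r1 < b" "q1 < q2"
  shows "q1*b + r1 < q2*b + r2"
proof -
  have "q1*b + r1 < (q1+1)*b" using assms(1) by simp
  also have "\<dots> \<le> q2*b" using assms(2) by (intro mult_le_mono1) simp
  finally show ?thesis by simp
qed

lemma lex_le:
  fixes b :: nat
  assumes "r1 < b" "r2 < b"
  shows "(q1*b + r1 \<le> q2*b + r2) \<longleftrightarrow> (q1 < q2 \<or> (q1 = q2 \<and> r1 \<le> r2))"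
  using lex_lt_aux[OF assms(1), of q1 q2 r2] lex_lt_aux[OF assms(2), of q2 q1 r1]
  by (cases "q1 < q2"; cases "q2 < q1") auto

lemma lex_less:
  fixes b :: nat
  assumes "r1 < b" "r2 < b"
  shows "(q1*b + r1 < q2*b + r2) \<longleftrightarrow> (q1 < q2 \<or> (q1 = q2 \<and> r1 < r2))"
  using lex_le[OF assms(2,1), of q2 q1] by auto

lemma C_eq: "2 * aa k + 2 * k * bb k = (2*k+1)*(9*k+6) + (3*k+4)"
  by (simp add: abc algebra_simps)

lemma H13_iff: "x \<in> H13 k \<longleftrightarrow> x = 0 \<or> (\<exists>i\<le>k. x \<in> A_set i k \<or> x \<in> B_set i k) \<or> x \<ge> 2 * aa k + 2 * k * bb k"
  unfolding H13_def I_set_def by auto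

lemma HQ_b: "1 \<le> q \<Longrightarrow> r \<le> 3*q div 2 \<Longrightarrow> HQ k q r" unfolding HQ_def by blast
lemma HQ_2a: "1 \<le> q \<Longrightarrow> 3*k+4 \<le> r \<Longrightarrow> r \<le> 3*k+4+3*(q-1) div 2 \<Longrightarrow> HQ k q r"
  unfolding HQ_def by blast
lemma HQ_a: "6*k+5 \<le> r \<Longrightarrow> r \<le> 6*k+5 + 3*q div 2 \<Longrightarrow> HQ k q r" unfolding HQ_def by blast

lemma H_fwd:
  assumes "x \<in> H13 k"
  shows "HQ k (x div (9*k+6)) (x mod (9*k+6))"
proof -
  define b where "b = bb k"
  have bk: "b = 9*k+6" by (simp add: b_def abc)
  have b0: "0 < b" by (simp add: bk)
  have key1: "HQ k (x div b) (x mod b)" if "x = m*b + u" "u < b" "HQ k m u" for m u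
    using divmod_pair[OF b0, of u m] that by simp
  have key2: "HQ k (x div b) (x mod b)" if "x = m*b + u" "b \<le> u" "u < 2*b" "HQ k (Suc m) (u-b)" for m u
    using divmod_pair[OF b0 that(3), of m] that by simp
  consider "x = 0" | i where "i \<le> k" "x \<in> A_set i k" | i where "i \<le> k" "x \<in> B_set i k"
    | "x \<ge> 2 * aa k + 2 * k * bb k" using assms[unfolded H13_iff] by blast
  then have "HQ k (x div b) (x mod b)"
  proof cases
    case 1 then show ?thesis by (simp add: HQ_def)
  next
    case (2 i)
    note ik = 2(1)
    define u where "u = x - 2*i*b"
    have m: "2*i*b \<le> x \<and> u \<in> {aa k .. aa k + 3*i} \<union> {b .. b + 1 + 3*i} \<union> {2 * aa k .. 2 * aa k + 3*i}"
      using 2(2) unfolding A_set_def setplus_single u_def b_def by simp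
    have xe: "x = (2*i)*b + u" using m u_def by simp
    from m consider "6*k+5 \<le> u" "u \<le> 6*k+5 + 3*i" | "b \<le> u" "u \<le> b + 1 + 3*i"
      | "2*(6*k+5) \<le> u" "u \<le> 2*(6*k+5) + 3*i" unfolding abc by auto
    then show ?thesis
    proof cases
      case 1 then show ?thesis using ik by (intro key1[OF xe] HQ_a) (auto simp: bk)
    next
      case 2 then show ?thesis using ik by (intro key2[OF xe] HQ_b) (auto simp: bk)
    next
      case 3 then show ?thesis using ik by (intro key2[OF xe] HQ_2a) (auto simp: bk)
    qed
  next
    case (3 i)
    note ik = 3(1)
    define u where "u = x - (2*i+1)*b"
    have m: "(2*i+1)*b \<le> x \<and> u \<in> {aa k .. aa k + 1 + 3*i} \<union> {b .. b + 3 + 3*i} \<union> {2 * aa k .. 2 * aa k + 1 + 3*i}"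
      using 3(2) unfolding B_set_def setplus_single u_def b_def by simp
    have xe: "x = (2*i+1)*b + u" using m u_def by simp
    from m consider "6*k+5 \<le> u" "u \<le> 6*k+5 + 1 + 3*i" | "b \<le> u" "u \<le> b + 3 + 3*i"
      | "2*(6*k+5) \<le> u" "u \<le> 2*(6*k+5) + 1 + 3*i" unfolding abc by auto
    then show ?thesis
    proof cases
      case 1
      show ?thesis
      proof (cases "u < b")
        case True then show ?thesis using 1 ik by (intro key1[OF xe] HQ_a) (auto simp: bk)
      next
        case False then have "u = b" using 1 ik by (simp add: bk)
        then show ?thesis using ik by (intro key2[OF xe] HQ_b) (auto simp: bk)
      qed
    next
      case 2 then show ?thesis using ik by (intro key2[OF xe] HQ_b) (auto simp: bk)
    next
      case 3 then show ?thesis using ik by (intro key2[OF xe] HQ_2a) (auto simp: bk)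
    qed
  next
    case 4
    have x: "(x div b)*b + x mod b = x" by (rule div_mult_mod_eq)
    have c: "2 * aa k + 2 * k * bb k = (2*k+1)*b + (3*k+4)" using C_eq[of k] bk by simp
    have "(2*k+1)*b + (3*k+4) \<le> (x div b)*b + x mod b" using 4 unfolding c x .
    then have "2*k+1 < x div b \<or> (2*k+1 = x div b \<and> 3*k+4 \<le> x mod b)"
      by (subst (asm) lex_le) (auto simp: bk)
    then show ?thesis unfolding HQ_def by auto
  qed
  then show ?thesis by (simp add: bk)
qed


lemma div_facts: "3*(2*i) div 2 = 3*(i::nat)" "3*(2*i+1) div 2 = 3*i+1" "3*(2*i+2) div 2 = 3*i+3"
  "3*(2*i+1-1) div 2 = 3*i" "3*(2*i+2-1) div 2 = 3*i+1" "3*(2*i-1) div 2 = 3*i-2"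
  by simp_all

lemma memA:
  assumes "i \<le> k" "u \<in> {aa k .. aa k + 3*i} \<union> {bb k .. bb k + 1 + 3*i} \<union> {2 * aa k .. 2 * aa k + 3*i}"
  shows "2*i*bb k + u \<in> H13 k"
proof -
  have "2*i*bb k + u \<in> A_set i k" using assms(2) unfolding A_set_def setplus_single by simp
  then show ?thesis using assms(1) unfolding H13_iff by blast
qed

lemma memB:
  assumes "i \<le> k" "u \<in> {aa k .. aa k + 1 + 3*i} \<union> {bb k .. bb k + 3 + 3*i} \<union> {2 * aa k .. 2 * aa k + 1 + 3*i}"
  shows "(2*i+1)*bb k + u \<in> H13 k"
proof -
  have "(2*i+1)*bb k + u \<in> B_set i k" using assms(2) unfolding B_set_def setplus_single by simp
  then show ?thesis using assms(1) unfolding H13_iff by blast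
qed

lemma H_bwd:
  assumes r: "r < 9*k+6" and h: "HQ k q r"
  shows "q*(9*k+6) + r \<in> H13 k"
proof -
  define b where "b = bb k"
  have bk: "b = 9*k+6" by (simp add: b_def abc)
  have ab: "aa k = 6*k+5" by (simp add: abc)
  have rb: "r < b" using r bk by simp
  show ?thesis
  proof (cases "2*k+1 < q \<or> (2*k+1 = q \<and> 3*k+4 \<le> r)")
    case True
    then have "(2*k+1)*b + (3*k+4) \<le> q*b + r" by (subst lex_le) (use r in \<open>auto simp: bk\<close>)
    moreover have c: "2 * aa k + 2 * k * bb k = (2*k+1)*b + (3*k+4)" using C_eq[of k] bk by simp
    ultimately show ?thesis unfolding H13_iff bk[symmetric] by simp
  next
    case False
    then have qk: "q \<le> 2*k+1" "q = 2*k+1 \<Longrightarrow> r < 3*k+4" by auto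
    have h': "(q = 0 \<and> r = 0) \<or> (1 \<le> q \<and> r \<le> 3*q div 2) \<or> (1 \<le> q \<and> 3*k+4 \<le> r \<and> r \<le> 3*k+4 + 3*(q-1) div 2)
    \<or> (6*k+5 \<le> r \<and> r \<le> 6*k+5 + 3*q div 2)" using h False unfolding HQ_def by auto
    have "\<exists>i. q = 2*i \<or> q = 2*i+1" by presburger
    then obtain i where "q = 2*i \<or> q = 2*i+1" by blast
    then consider "q = 0" | j where "q = 2*j+2" | i where "q = 2*i+1"
    proof (elim disjE)
      assume "q = 2*i" then show thesis using that by (cases i) auto
    qed (use that in blast)
    then show ?thesis
    proof cases
      case 1
      then have "r = 0 \<or> r = 6*k+5" using h' by auto
      then show ?thesis
      proof
        assume "r = 0" then show ?thesis using 1 by (simp add: H13_def)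
      next
        assume "r = 6*k+5" then show ?thesis using 1 memA[of 0 k "6*k+5"] by (simp add: ab)
      qed
    next
      case (2 j)
      have jk: "j \<le> k" using qk 2 by simp
      have e: "q*(9*k+6) + r = (2*j+1)*bb k + (b + r)" using 2 bk b_def by (simp add: algebra_simps)
      have h2: "r \<le> 3*j+3 \<or> (3*k+4 \<le> r \<and> r \<le> 3*k+4 + 3*j+1) \<or> (6*k+5 \<le> r \<and> r \<le> 6*k+5 + 3*j+3)"
        using h' 2 div_facts[of j] by auto
      show ?thesis
      proof (cases "6*k+5 \<le> r \<and> r \<le> 6*k+5 + 3*j+3")
        case True
        have e2: "q*(9*k+6) + r = 2*(j+1)*bb k + r" using 2 by (simp add: abc algebra_simps)
        show ?thesis unfolding e2 using True qk 2 by (intro memA) (auto simp: ab)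
      next
        case False
        then show ?thesis unfolding e using h2 jk by (intro memB) (auto simp: abc bk)
      qed
    next
      case (3 i)
      have ik: "i \<le> k" using qk 3 by simp
      have h2: "r \<le> 3*i+1 \<or> (3*k+4 \<le> r \<and> r \<le> 3*k+4 + 3*i) \<or> (6*k+5 \<le> r \<and> r \<le> 6*k+5 + 3*i+1)"
        using h' 3 div_facts[of i] by auto
      show ?thesis
      proof (cases "6*k+5 \<le> r \<and> r \<le> 6*k+5 + 3*i+1")
        case True
        have e2: "q*(9*k+6) + r = (2*i+1)*bb k + r" using 3 by (simp add: abc)
        show ?thesis unfolding e2 using True ik by (intro memB) (auto simp: ab)
      next
        case False
        have e: "q*(9*k+6) + r = 2*i*bb k + (b + r)" using 3 bk b_def by (simp add: algebra_simps)
        show ?thesis unfolding e using h2 ik False by (intro memA) (auto simp: abc bk)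
      qed
    qed
  qed
qed

lemma H_char: "x \<in> H13 k \<longleftrightarrow> HQ k (x div (9*k+6)) (x mod (9*k+6))"
proof
  assume "HQ k (x div (9*k+6)) (x mod (9*k+6))"
  from H_bwd[OF _ this] have "x div (9*k+6) * (9*k+6) + x mod (9*k+6) \<in> H13 k" by simp
  then show "x \<in> H13 k" by (simp only: div_mult_mod_eq)
qed (rule H_fwd)



definition succQ :: "nat \<Rightarrow> nat \<Rightarrow> nat \<Rightarrow> nat \<times> nat" where
 "succQ k q r = (if r+1 < 9*k+6 \<and> HQ k q (r+1) then (q, r+1) else if 1 \<le> q \<and> r < 3*k+4 then (q, 3*k+4)
     else if r < 6*k+5 then (q, 6*k+5) else (q+1, 0))"

definition MQ :: "nat \<Rightarrow> nat \<Rightarrow> nat \<Rightarrow> nat" where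
 "MQ k q r = (if q = 0 \<and> r = 0 then 0 else if 2*k+2 \<le> q then r mod 3 else if even q then
    (if r < 6*k+5 then (r+1) mod 3 else (r+2) mod 3) else (if r < 3*k+4 then (r+2) mod 3 else r mod 3))"

lemma succ1: "r+1 < 9*k+6 \<Longrightarrow> HQ k q (r+1) \<Longrightarrow> succQ k q r = (q, r+1)"
  unfolding succQ_def by simp
lemma succ2: "\<not> HQ k q (r+1) \<Longrightarrow> 1 \<le> q \<Longrightarrow> r < 3*k+4 \<Longrightarrow> succQ k q r = (q, 3*k+4)"
  unfolding succQ_def by simp
lemma succ3: "\<not> HQ k q (r+1) \<Longrightarrow> \<not> (1 \<le> q \<and> r < 3*k+4) \<Longrightarrow> r < 6*k+5 \<Longrightarrow> succQ k q r = (q, 6*k+5)"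
  unfolding succQ_def by simp
lemma succ4: "\<not> (r+1 < 9*k+6 \<and> HQ k q (r+1)) \<Longrightarrow> \<not> (1 \<le> q \<and> r < 3*k+4) \<Longrightarrow> \<not> r < 6*k+5 \<Longrightarrow> succQ k q r = (q+1, 0)"
  unfolding succQ_def by simp

lemma HQ_even: "i \<le> k \<Longrightarrow> HQ k (2*i) r \<longleftrightarrow> (i = 0 \<and> r = 0) \<or> (1 \<le> i \<and> r \<le> 3*i) \<or> (1 \<le> i \<and> 3*k+4 \<le> r \<and> r + 2 \<le> 3*k+4+3*i)
   \<or> (6*k+5 \<le> r \<and> r \<le> 6*k+5+3*i)"
proof -
  assume "i \<le> k"
  have W: "3*(2*i) div 2 = 3*i" "3*(2*i-1) div 2 = 3*i - 2" by presburger+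
  show ?thesis unfolding HQ_def W using \<open>i \<le> k\<close> by auto
qed

lemma HQ_odd: "i \<le> k \<Longrightarrow> HQ k (2*i+1) r \<longleftrightarrow> (i = k \<and> 3*k+4 \<le> r) \<or> r \<le> 3*i+1 \<or> (3*k+4 \<le> r \<and> r \<le> 3*k+4+3*i)
   \<or> (6*k+5 \<le> r \<and> r \<le> 6*k+6+3*i)"
proof -
  assume "i \<le> k"
  have W: "3*(2*i+1) div 2 = 3*i+1" "3*(2*i+1-1) div 2 = 3*i" by presburger+
  show ?thesis unfolding HQ_def W using \<open>i \<le> k\<close> by auto
qed

lemma HQ_odd': "i \<le> k \<Longrightarrow> HQ k (Suc (2*i)) r \<longleftrightarrow> (i = k \<and> 3*k+4 \<le> r) \<or> r \<le> 3*i+1 \<or> (3*k+4 \<le> r \<and> r \<le> 3*k+4+3*i)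
   \<or> (6*k+5 \<le> r \<and> r \<le> 6*k+6+3*i)" using HQ_odd by simp

lemma HQ_big: "2*k+2 \<le> q \<Longrightarrow> HQ k q r" unfolding HQ_def by simp

lemma MQ_even: "i \<le> k \<Longrightarrow> MQ k (2*i) r = (if i = 0 \<and> r = 0 then 0 else if r < 6*k+5 then (r+1) mod 3 else (r+2) mod 3)"
  unfolding MQ_def by auto
lemma MQ_odd: "i \<le> k \<Longrightarrow> MQ k (2*i+1) r = (if r < 3*k+4 then (r+2) mod 3 else r mod 3)"
  unfolding MQ_def by auto
lemma MQ_odd': "i \<le> k \<Longrightarrow> MQ k (Suc (2*i)) r = (if r < 3*k+4 then (r+2) mod 3 else r mod 3)"
  using MQ_odd by simp
lemma MQ_even2: "i+1 \<le> k \<Longrightarrow> MQ k (Suc (Suc (2*i))) r = (if r < 6*k+5 then (r+1) mod 3 else (r+2) mod 3)"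
  using MQ_even[of "i+1" k r] by simp
lemma MQ_big: "2*k+2 \<le> q \<Longrightarrow> MQ k q r = r mod 3"
  unfolding MQ_def by auto


lemma P3_even:
  assumes ik: "i \<le> k" and h: "HQ k (2*i) r" and rb: "r < 9*k+6" and s: "succQ k (2*i) r = (q', r')"
  shows "MQ k q' r' = (MQ k (2*i) r + 1) mod 3 \<and> (MQ k (2*i) r = 0 \<or> r' mod 3 = (r+1) mod 3)"
proof -
  have h': "(i = 0 \<and> r = 0) \<or> (1 \<le> i \<and> r \<le> 3*i) \<or> (1 \<le> i \<and> 3*k+4 \<le> r \<and> r + 2 \<le> 3*k+4+3*i)
   \<or> (6*k+5 \<le> r \<and> r \<le> 6*k+5+3*i)" using h HQ_even[OF ik] by blast
  consider (E0) "i = 0" "r = 0" | (E1) "1 \<le> i" "r < 3*i" | (E2) "1 \<le> i" "r = 3*i"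
    | (E3) "1 \<le> i" "3*k+4 \<le> r" "r + 3 \<le> 3*k+4+3*i" | (E4) "1 \<le> i" "r + 2 = 3*k+4+3*i"
    | (E5) "6*k+5 \<le> r" "r < 6*k+5+3*i" | (E6) "r = 6*k+5+3*i"
    using h' ik by (elim disjE conjE) (linarith | metis le_neq_implies_less | blast)+
  then show ?thesis
  proof cases
    case E0
    have e: "succQ k (2*i) r = (2*i, 6*k+5)" by (rule succ3) (use E0 ik in \<open>simp_all add: HQ_def\<close>)
    have q: "q' = 2*i" and r': "r' = 6*k+5" using s e by auto
    show ?thesis unfolding q r' using E0 ik by (simp add: MQ_def; presburger)
  next
    case E1
    have e: "succQ k (2*i) r = (2*i, r+1)" by (rule succ1) (use E1 ik rb in \<open>simp_all add: HQ_even\<close>)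
    have q: "q' = 2*i" and r': "r' = r+1" using s e by auto
    show ?thesis unfolding q r' using E1 ik by (simp add: MQ_even mod_Suc_eq; presburger)
  next
    case E2
    have e: "succQ k (2*i) r = (2*i, 3*k+4)" by (rule succ2) (use E2 ik in \<open>simp_all add: HQ_even\<close>)
    have q: "q' = 2*i" and r': "r' = 3*k+4" using s e by auto
    show ?thesis unfolding q r' using E2 ik by (simp add: MQ_even mod_Suc_eq; presburger)
  next
    case E3
    have e: "succQ k (2*i) r = (2*i, r+1)" by (rule succ1) (use E3 ik rb in \<open>simp_all add: HQ_even\<close>)
    have q: "q' = 2*i" and r': "r' = r+1" using s e by auto
    show ?thesis unfolding q r' using E3 ik by (simp add: MQ_even mod_Suc_eq; presburger)
  next
    case E4
    have e: "succQ k (2*i) r = (2*i, 6*k+5)" by (rule succ3) (use E4 ik in \<open>simp_all add: HQ_even\<close>)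
    have q: "q' = 2*i" and r': "r' = 6*k+5" using s e by auto
    show ?thesis unfolding q r' using E4 ik by (simp add: MQ_even mod_Suc_eq; presburger)
  next
    case E5
    have e: "succQ k (2*i) r = (2*i, r+1)" by (rule succ1) (use E5 ik rb in \<open>simp_all add: HQ_even\<close>)
    have q: "q' = 2*i" and r': "r' = r+1" using s e by auto
    show ?thesis unfolding q r' using E5 ik by (simp add: MQ_even mod_Suc_eq; presburger)
  next
    case E6
    have e: "succQ k (2*i) r = (2*i+1, 0)" by (rule succ4) (use E6 ik in \<open>simp_all add: HQ_even\<close>)
    have q: "q' = 2*i+1" and r': "r' = 0" using s e by auto
    show ?thesis unfolding q r' using E6 ik by (simp add: MQ_even MQ_odd' mod_Suc_eq; presburger)
  qed
qed

lemma P3_odd: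
  assumes ik: "i \<le> k" and h: "HQ k (2*i+1) r" and rb: "r < 9*k+6" and s: "succQ k (2*i+1) r = (q', r')"
  shows "MQ k q' r' = (MQ k (2*i+1) r + 1) mod 3 \<and> (MQ k (2*i+1) r = 0 \<or> r' mod 3 = (r+1) mod 3)"
proof -
  have h': "(i = k \<and> 3*k+4 \<le> r) \<or> r \<le> 3*i+1 \<or> (3*k+4 \<le> r \<and> r \<le> 3*k+4+3*i)
   \<or> (6*k+5 \<le> r \<and> r \<le> 6*k+6+3*i)" using h HQ_odd[OF ik] by blast
  consider (O1) "r < 3*i+1" | (O2) "r = 3*i+1" | (O3C) "i = k" "3*k+4 \<le> r" "r + 1 < 9*k+6"
    | (O3E) "i = k" "r + 1 = 9*k+6"
    | (O3) "i < k" "3*k+4 \<le> r" "r < 3*k+4+3*i" | (O4) "i < k" "r = 3*k+4+3*i"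
    | (O5) "i < k" "6*k+5 \<le> r" "r < 6*k+6+3*i" | (O6) "i < k" "r = 6*k+6+3*i"
    using h' ik rb by (elim disjE conjE) (linarith | metis le_neq_implies_less | blast)+
  then show ?thesis
  proof cases
    case O1
    have e: "succQ k (2*i+1) r = (2*i+1, r+1)" by (rule succ1) (use O1 ik rb in \<open>simp_all add: HQ_odd'\<close>)
    have q: "q' = 2*i+1" and r': "r' = r+1" using s e by auto
    show ?thesis unfolding q r' using O1 ik by (simp add: MQ_odd' mod_Suc_eq; presburger)
  next
    case O2
    have e: "succQ k (2*i+1) r = (2*i+1, 3*k+4)" by (rule succ2) (use O2 ik rb in \<open>simp_all add: HQ_odd'\<close>)
    have q: "q' = 2*i+1" and r': "r' = 3*k+4" using s e by auto
    show ?thesis unfolding q r' using O2 ik by (simp add: MQ_odd' mod_Suc_eq; presburger)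
  next
    case O3C
    have e: "succQ k (2*i+1) r = (2*i+1, r+1)" by (rule succ1) (use O3C ik rb in \<open>simp_all add: HQ_odd'\<close>)
    have q: "q' = 2*i+1" and r': "r' = r+1" using s e by auto
    show ?thesis unfolding q r' using O3C ik by (simp add: MQ_odd' mod_Suc_eq; presburger)
  next
    case O3E
    have e: "succQ k (2*i+1) r = (2*i+1+1, 0)" by (rule succ4) (use O3E ik rb in \<open>simp_all add: HQ_odd'\<close>)
    have q: "q' = 2*i+2" and r': "r' = 0" using s e by auto
    show ?thesis unfolding q r' using O3E ik by (simp add: MQ_odd' MQ_big mod_Suc_eq; presburger)
  next
    case O3
    have e: "succQ k (2*i+1) r = (2*i+1, r+1)" by (rule succ1) (use O3 ik rb in \<open>simp_all add: HQ_odd'\<close>)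
    have q: "q' = 2*i+1" and r': "r' = r+1" using s e by auto
    show ?thesis unfolding q r' using O3 ik by (simp add: MQ_odd' mod_Suc_eq; presburger)
  next
    case O4
    have e: "succQ k (2*i+1) r = (2*i+1, 6*k+5)" by (rule succ3) (use O4 ik rb in \<open>simp_all add: HQ_odd'\<close>)
    have q: "q' = 2*i+1" and r': "r' = 6*k+5" using s e by auto
    show ?thesis unfolding q r' using O4 ik by (simp add: MQ_odd' mod_Suc_eq; presburger)
  next
    case O5
    have e: "succQ k (2*i+1) r = (2*i+1, r+1)" by (rule succ1) (use O5 ik rb in \<open>simp_all add: HQ_odd'\<close>)
    have q: "q' = 2*i+1" and r': "r' = r+1" using s e by auto
    show ?thesis unfolding q r' using O5 ik by (simp add: MQ_odd' mod_Suc_eq; presburger)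
  next
    case O6
    have e: "succQ k (2*i+1) r = (2*i+1+1, 0)" by (rule succ4) (use O6 ik rb in \<open>simp_all add: HQ_odd'\<close>)
    have q: "q' = 2*i+2" and r': "r' = 0" using s e by auto
    show ?thesis unfolding q r' using O6 ik by (simp add: MQ_odd' MQ_even2 mod_Suc_eq; presburger)
  qed
qed

lemma P3_big:
  assumes qk: "2*k+2 \<le> q" and rb: "r < 9*k+6" and s: "succQ k q r = (q', r')"
  shows "MQ k q' r' = (MQ k q r + 1) mod 3 \<and> (MQ k q r = 0 \<or> r' mod 3 = (r+1) mod 3)"
proof (cases "r + 1 < 9*k+6")
  case True
  have e: "succQ k q r = (q, r+1)" by (rule succ1) (use True qk in \<open>simp_all add: HQ_big\<close>)
  have q: "q' = q" and r': "r' = r+1" using s e by auto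
  show ?thesis unfolding q r' using qk by (simp add: MQ_big mod_Suc_eq)
next
  case False
  have e: "succQ k q r = (q+1, 0)" by (rule succ4) (use False qk in \<open>simp_all\<close>)
  have q: "q' = q+1" and r': "r' = 0" using s e by auto
  have "r = 9*k+5" using False rb by simp
  then show ?thesis unfolding q r' using qk by (simp add: MQ_big; presburger)
qed

definition HQ' :: "nat \<Rightarrow> nat \<Rightarrow> nat \<Rightarrow> nat \<Rightarrow> nat \<Rightarrow> bool" where
 "HQ' k q r W V \<longleftrightarrow> (q = 0 \<and> r = 0) \<or> 2*k+2 \<le> q \<or> (q = 2*k+1 \<and> 3*k+4 \<le> r)
    \<or> (1 \<le> q \<and> r \<le> W) \<or> (1 \<le> q \<and> 3*k+4 \<le> r \<and> r \<le> 3*k+4 + V)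
    \<or> (6*k+5 \<le> r \<and> r \<le> 6*k+5 + W)"

lemma HQ'I: 
  "q = 0 \<Longrightarrow> r = 0 \<Longrightarrow> HQ' k q r W V"
  "2*k+2 \<le> q \<Longrightarrow> HQ' k q r W V"
  "q = 2*k+1 \<Longrightarrow> 3*k+4 \<le> r \<Longrightarrow> HQ' k q r W V"
  "1 \<le> q \<Longrightarrow> r \<le> W \<Longrightarrow> HQ' k q r W V"
  "1 \<le> q \<Longrightarrow> 3*k+4 \<le> r \<Longrightarrow> r \<le> 3*k+4 + V \<Longrightarrow> HQ' k q r W V"
  "6*k+5 \<le> r \<Longrightarrow> r \<le> 6*k+5 + W \<Longrightarrow> HQ' k q r W V"
  unfolding HQ'_def by auto

lemma HQ_eq: "HQ k q r = HQ' k q r (3*q div 2) (3*(q-1) div 2)"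
  unfolding HQ_def HQ'_def ..

lemma N1abs: "HQ' k q r2 W V \<Longrightarrow> r < r2 \<Longrightarrow> r2 < 3*k+4 \<Longrightarrow> 1 \<le> q \<Longrightarrow> HQ' k q (r+1) W V"
  unfolding HQ'_def[of k q r2] by - (elim disjE conjE; (linarith | (rule HQ'I(1); linarith) | (rule HQ'I(2); linarith)
       | (rule HQ'I(3); linarith) | (rule HQ'I(4); linarith) | (rule HQ'I(5); linarith) | (rule HQ'I(6); linarith)))
lemma N2abs: "HQ' k q r2 W V \<Longrightarrow> r < r2 \<Longrightarrow> r2 < 6*k+5 \<Longrightarrow> q = 0 \<or> 3*k+4 \<le> r \<Longrightarrow> HQ' k q (r+1) W V"
  unfolding HQ'_def[of k q r2] by - (elim disjE conjE; (linarith | (rule HQ'I(1); linarith) | (rule HQ'I(2); linarith)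
       | (rule HQ'I(3); linarith) | (rule HQ'I(4); linarith) | (rule HQ'I(5); linarith) | (rule HQ'I(6); linarith)))
lemma N3abs: "HQ' k q r2 W V \<Longrightarrow> r < r2 \<Longrightarrow> 6*k+5 \<le> r \<Longrightarrow> HQ' k q (r+1) W V"
  unfolding HQ'_def[of k q r2] by - (elim disjE conjE; (linarith | (rule HQ'I(1); linarith) | (rule HQ'I(2); linarith)
       | (rule HQ'I(3); linarith) | (rule HQ'I(4); linarith) | (rule HQ'I(5); linarith) | (rule HQ'I(6); linarith)))

lemma P2:
  assumes h2: "HQ k q' r'" and rb: "r < 9*k+6" "r' < 9*k+6"
    and lt: "q < q' \<or> (q = q' \<and> r < r')" and s: "succQ k q r = (s1, s2)"
  shows "s1 < q' \<or> (s1 = q' \<and> s2 \<le> r')"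
proof (cases "q < q'")
  case True
  have "s1 = q \<or> (s1 = q+1 \<and> s2 = 0)" using s unfolding succQ_def by (auto split: if_splits)
  then show ?thesis using True by auto
next
  case False
  then have qq: "q' = q" "r < r'" using lt by auto
  have h2': "HQ k q r'" using h2 qq by simp
  show ?thesis
  proof (cases "r+1 < 9*k+6 \<and> HQ k q (r+1)")
    case True then show ?thesis using s qq unfolding succQ_def by auto
  next
    case nh: False
    show ?thesis
    proof (cases "1 \<le> q \<and> r < 3*k+4")
      case True
      have "3*k+4 \<le> r'"
      proof (rule ccontr)
        assume "\<not> 3*k+4 \<le> r'"
        then have "HQ k q (r+1)" using N1abs[of k q r' _ _ r] h2' qq True unfolding HQ_eq by simp
        then show False using nh True by simp
      qed
      then show ?thesis using s nh True qq unfolding succQ_def by auto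
    next
      case F2: False
      show ?thesis
      proof (cases "r < 6*k+5")
        case True
        have "6*k+5 \<le> r'"
        proof (rule ccontr)
          assume "\<not> 6*k+5 \<le> r'"
          then have "HQ k q (r+1)" using N2abs[of k q r' _ _ r] h2' qq F2 unfolding HQ_eq by auto
          then show False using nh True by simp
        qed
        then show ?thesis using s nh F2 True qq unfolding succQ_def by auto
      next
        case False
        have "HQ k q (r+1)" using N3abs[of k q r' _ _ r] h2' qq False unfolding HQ_eq by simp
        then have "\<not> r+1 < 9*k+6" using nh by simp
        then show ?thesis using qq rb by simp
      qed
    qed
  qed
qed

lemma P1:
  assumes h: "HQ k q r" and rb: "r < 9*k+6" and s: "succQ k q r = (s1, s2)"
  shows "HQ k s1 s2 \<and> s2 < 9*k+6 \<and> (q < s1 \<or> (q = s1 \<and> r < s2))"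
  using s unfolding succQ_def by (auto split: if_splits simp: HQ_def)

lemma add_b_abs:
  fixes k q r Wq Vq Wq1 :: nat
  assumes "HQ' k q r Wq Vq" "Wq + 1 \<le> Wq1" "Vq \<le> Wq"
  shows "HQ' k (q+1) r Wq1 Wq"
  using assms(1)[unfolded HQ'_def] assms(2,3) by - (elim disjE conjE; (linarith | (rule HQ'I(1); linarith) | (rule HQ'I(2); linarith)
       | (rule HQ'I(3); linarith) | (rule HQ'I(4); linarith) | (rule HQ'I(5); linarith) | (rule HQ'I(6); linarith)))

lemma add_c_abs:
  fixes k q r Wq Vq Wq1 :: nat
  assumes "HQ' k q r Wq Vq" "r < 9*k+6" "Wq + 1 \<le> Wq1" "1 \<le> q \<Longrightarrow> Vq + 1 \<le> Wq" "Vq \<le> Wq" "2*Wq \<le> 3*q"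
  shows "(r + 1 < 9*k+6 \<longrightarrow> HQ' k (q+1) (r+1) Wq1 Wq) \<and> (r + 1 = 9*k+6 \<longrightarrow> 2*k+2 \<le> q+2)"
proof (cases "1 \<le> q")
  case True
  then show ?thesis using assms(1)[unfolded HQ'_def] assms(2,3,5,6) assms(4)[OF True] 
    by - (intro conjI impI; elim disjE conjE; (linarith | (rule HQ'I(1); linarith) | (rule HQ'I(2); linarith)
       | (rule HQ'I(3); linarith) | (rule HQ'I(4); linarith) | (rule HQ'I(5); linarith) | (rule HQ'I(6); linarith)))
next
  case False
  then show ?thesis using assms(1)[unfolded HQ'_def] assms(2,3,5,6)
    by - (intro conjI impI; elim disjE conjE; (linarith | (rule HQ'I(1); linarith) | (rule HQ'I(2); linarith)
       | (rule HQ'I(3); linarith) | (rule HQ'I(4); linarith) | (rule HQ'I(5); linarith) | (rule HQ'I(6); linarith)))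
qed

lemma add_a_abs:
  fixes k q r Wq Vq Wq1 :: nat
  assumes "HQ' k q r Wq Vq" "r < 9*k+6" "Wq + 1 \<le> Wq1" "1 \<le> q \<Longrightarrow> Vq + 3 \<le> Wq1" "Vq \<le> Wq"
    "2*k+1 \<le> q \<or> Wq \<le> 3*k"
  shows "(r + (6*k+5) < 9*k+6 \<longrightarrow> HQ' k q (r+(6*k+5)) Wq Vq) \<and> (9*k+6 \<le> r + (6*k+5) \<longrightarrow> HQ' k (q+1) (r - (3*k+1)) Wq1 Wq)"
proof (cases "1 \<le> q")
  case True
  then show ?thesis using assms(1)[unfolded HQ'_def] assms(2,3,5,6) assms(4)[OF True] 
    by - (intro conjI impI; elim disjE conjE; (linarith | (rule HQ'I(1); linarith) | (rule HQ'I(2); linarith)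
       | (rule HQ'I(3); linarith) | (rule HQ'I(4); linarith) | (rule HQ'I(5); linarith) | (rule HQ'I(6); linarith)))
next
  case False
  then show ?thesis using assms(1)[unfolded HQ'_def] assms(2,3,5,6)
    by - (intro conjI impI; elim disjE conjE; (linarith | (rule HQ'I(1); linarith) | (rule HQ'I(2); linarith)
       | (rule HQ'I(3); linarith) | (rule HQ'I(4); linarith) | (rule HQ'I(5); linarith) | (rule HQ'I(6); linarith)))
qed

lemma Wfacts:
  fixes q k :: nat
  shows "3*q div 2 + 1 \<le> 3*(q+1) div 2" "3*(q-1) div 2 \<le> 3*q div 2"
    "1 \<le> q \<Longrightarrow> 3*(q-1) div 2 + 1 \<le> 3*q div 2" "2*(3*q div 2) \<le> 3*q"
    "1 \<le> q \<Longrightarrow> 3*(q-1) div 2 + 3 \<le> 3*(q+1) div 2" "2*k+1 \<le> q \<or> 3*q div 2 \<le> 3*k"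
  by presburger+

lemma dm: "u < (b::nat) \<Longrightarrow> (m*b+u) div b = m \<and> (m*b+u) mod b = u"
  by simp

lemma H_add_b:
  assumes "x \<in> H13 k" shows "x + bb k \<in> H13 k"
proof -
  define q r where "q = x div (9*k+6)" and "r = x mod (9*k+6)"
  have h: "HQ k q r" using H_fwd[OF assms] by (simp add: q_def r_def)
  have "HQ' k (q+1) r (3*(q+1) div 2) (3*q div 2)"
    using add_b_abs[OF h[unfolded HQ_eq] Wfacts(1) Wfacts(2)] .
  then have h2: "HQ k (q+1) r" unfolding HQ_eq by simp
  have x: "x = q*(9*k+6) + r" unfolding q_def r_def by (rule div_mult_mod_eq[symmetric])
  have eq: "x + bb k = (q+1)*(9*k+6) + r" by (simp add: x abc)
  have "r < 9*k+6" by (simp add: r_def)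
  then show ?thesis unfolding eq by (rule H_bwd[OF _ h2])
qed

lemma H_add_c:
  assumes "x \<in> H13 k" shows "x + cc k \<in> H13 k"
proof -
  define q r where "q = x div (9*k+6)" and "r = x mod (9*k+6)"
  have h: "HQ k q r" using H_fwd[OF assms] by (simp add: q_def r_def)
  have rb: "r < 9*k+6" by (simp add: r_def)
  have x: "x = q*(9*k+6) + r" unfolding q_def r_def by (rule div_mult_mod_eq[symmetric])
  note c = add_c_abs[OF h[unfolded HQ_eq] rb Wfacts(1) Wfacts(3) Wfacts(2) Wfacts(4)]
  show ?thesis
  proof (cases "r + 1 < 9*k+6")
    case True
    then have "HQ' k (q+1) (r+1) (3*(q+1) div 2) (3*q div 2)" using c by simp
    then have h2: "HQ k (q+1) (r+1)" unfolding HQ_eq by simp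
    have eq: "x + cc k = (q+1)*(9*k+6) + (r+1)" by (simp add: x abc)
    show ?thesis unfolding eq by (rule H_bwd[OF True h2])
  next
    case False
    then have r1: "r + 1 = 9*k+6" using rb by simp
    then have "2*k+2 \<le> q+2" using c by simp
    then have h2: "HQ k (q+2) 0" unfolding HQ_def by simp
    have eq: "x + cc k = (q+2)*(9*k+6) + 0" using r1 by (simp add: x abc algebra_simps)
    show ?thesis unfolding eq by (rule H_bwd[OF _ h2]) simp
  qed
qed

lemma H_add_a:
  assumes "x \<in> H13 k" shows "x + aa k \<in> H13 k"
proof -
  define q r where "q = x div (9*k+6)" and "r = x mod (9*k+6)"
  have h: "HQ k q r" using H_fwd[OF assms] by (simp add: q_def r_def)
  have rb: "r < 9*k+6" by (simp add: r_def)
  have x: "x = q*(9*k+6) + r" unfolding q_def r_def by (rule div_mult_mod_eq[symmetric])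
  note c = add_a_abs[OF h[unfolded HQ_eq] rb Wfacts(1) Wfacts(5) Wfacts(2) Wfacts(6)]
  show ?thesis
  proof (cases "r + (6*k+5) < 9*k+6")
    case True
    then have h2: "HQ k q (r+(6*k+5))" using c unfolding HQ_eq by simp
    have eq: "x + aa k = q*(9*k+6) + (r+(6*k+5))" by (simp add: x abc)
    show ?thesis unfolding eq by (rule H_bwd[OF True h2])
  next
    case False
    then have "HQ' k (q+1) (r - (3*k+1)) (3*(q+1) div 2) (3*q div 2)" using c by simp
    then have h2: "HQ k (q+1) (r - (3*k+1))" unfolding HQ_eq by simp
    have eq: "x + aa k = (q+1)*(9*k+6) + (r - (3*k+1))" using False by (simp add: x abc)
    have "r - (3*k+1) < 9*k+6" using rb by simp
    then show ?thesis unfolding eq by (rule H_bwd[OF _ h2])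
  qed
qed

lemma gen_submonoid: "submonoid (gen S)"
  unfolding submonoid_def gen_def by auto

lemma gen_base: "S \<subseteq> gen S"
  unfolding gen_def by auto

lemma gen_least: "submonoid M \<Longrightarrow> S \<subseteq> M \<Longrightarrow> gen S \<subseteq> M"
  unfolding gen_def by auto

lemma gen_add: "x \<in> gen S \<Longrightarrow> y \<in> gen S \<Longrightarrow> x + y \<in> gen S"
  using gen_submonoid unfolding submonoid_def by blast

lemma gen_0: "0 \<in> gen S"
  using gen_submonoid unfolding submonoid_def by blast

lemma gen_mult: "s \<in> gen S \<Longrightarrow> n*s \<in> gen S"
  by (induction n) (simp_all add: gen_0 gen_add)

lemma gen_comb: "\<alpha>*aa k + \<beta>*bb k + \<gamma>*cc k \<in> gen {aa k, bb k, cc k}"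
  using gen_base[of "{aa k, bb k, cc k}"] by (intro gen_add gen_mult) auto

lemma L1:
  fixes q r k :: nat
  assumes "r \<le> 3*q div 2"
  shows "q*(9*k+6) + r \<in> gen {aa k, bb k, cc k}"
proof (cases "r \<le> q")
  case True
  then obtain s where q: "q = s + r" using le_Suc_ex by (metis add.commute)
  have "q*(9*k+6) + r = 0*aa k + s*bb k + r*cc k" by (simp add: q abc algebra_simps)
  then show ?thesis using gen_comb by metis
next
  case False
  have "2*r \<le> 3*q" using assms by presburger
  define t g where "t = r - q" and "g = q - 2*(r-q)"
  have q: "q = 2*t + g" and r: "r = 3*t + g" using False \<open>2*r \<le> 3*q\<close> by (simp_all add: t_def g_def)
  have "q*(9*k+6) + r = (3*t)*aa k + 0*bb k + g*cc k" by (simp add: q r abc algebra_simps)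
  then show ?thesis using gen_comb by metis
qed

lemma L2:
  fixes q r k :: nat
  assumes "1 \<le> q" "3*k+4 \<le> r" "r \<le> 3*k+4 + 3*(q-1) div 2"
  shows "q*(9*k+6) + r \<in> gen {aa k, bb k, cc k}"
proof -
  obtain p where p: "q = p + 1" using assms(1) by (metis add.commute le_Suc_ex)
  obtain j where j: "r = 3*k+4 + j" using assms(2) le_Suc_ex by blast
  have "j \<le> 3*p div 2" using assms(3) p j by simp
  then have g: "p*(9*k+6) + j \<in> gen {aa k, bb k, cc k}" by (rule L1)
  have "q*(9*k+6) + r = 2*aa k + (p*(9*k+6) + j)" by (simp add: p j abc algebra_simps)
  moreover have "2*aa k \<in> gen {aa k, bb k, cc k}" using gen_comb[of 2 k 0 0] by simp
  ultimately show ?thesis using g gen_add by metis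
qed

lemma L3:
  fixes q r k :: nat
  assumes "6*k+5 \<le> r" "r \<le> 6*k+5 + 3*q div 2"
  shows "q*(9*k+6) + r \<in> gen {aa k, bb k, cc k}"
proof -
  obtain j where j: "r = 6*k+5 + j" using assms(1) le_Suc_ex by blast
  have "j \<le> 3*q div 2" using assms(2) j by simp
  then have g: "q*(9*k+6) + j \<in> gen {aa k, bb k, cc k}" by (rule L1)
  have "q*(9*k+6) + r = aa k + (q*(9*k+6) + j)" by (simp add: j abc algebra_simps)
  moreover have "aa k \<in> gen {aa k, bb k, cc k}" using gen_base by blast
  ultimately show ?thesis using g gen_add by metis
qed

lemma Cgen:
  fixes k :: nat
  shows "(2*k+1)*(9*k+6) + (3*k+4) \<le> x \<Longrightarrow> x \<in> gen {aa k, bb k, cc k}"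
proof (induction x rule: less_induct)
  case (less x)
  define P where "P = (2*k+1)*(9*k+6)"
  show ?case
  proof (cases "P + (3*k+4) + (6*k+5) \<le> x")
    case True
    then have "x - aa k < x" "P + (3*k+4) \<le> x - aa k" by (simp_all add: abc)
    then have "x - aa k \<in> gen {aa k, bb k, cc k}" using less.IH P_def by blast
    moreover have "x = aa k + (x - aa k)" using True by (simp add: abc)
    moreover have "aa k \<in> gen {aa k, bb k, cc k}" using gen_base by blast
    ultimately show ?thesis using gen_add by metis
  next
    case False
    have lo: "P + (3*k+4) \<le> x" using less.prems P_def by simp
    show ?thesis
    proof (cases "x \<le> P + (6*k+4)")
      case True
      have "(2*k+1)*(9*k+6) + (x - P) \<in> gen {aa k, bb k, cc k}"
        by (rule L2) (use True lo in simp_all)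
      then show ?thesis using lo P_def by simp
    next
      case F2: False
      show ?thesis
      proof (cases "x \<le> P + (9*k+5)")
        case True
        have "(2*k+1)*(9*k+6) + (x - P) \<in> gen {aa k, bb k, cc k}"
          by (rule L3) (use True F2 in simp_all)
        then show ?thesis using lo P_def by simp
      next
        case F3: False
        have g: "(2*k+2)*(9*k+6) + (x - P - (9*k+6)) \<in> gen {aa k, bb k, cc k}"
          by (rule L1) (use F3 False in simp_all)
        have e1: "(2*k+2)*(9*k+6) = P + (9*k+6)" by (simp add: P_def algebra_simps)
        have eq: "x = (2*k+2)*(9*k+6) + (x - P - (9*k+6))" using F3 e1 by linarith
        show ?thesis using g eq by metis
      qed
    qed
  qed
qed

lemma H_sub_gen:
  assumes "x \<in> H13 k" shows "x \<in> gen {aa k, bb k, cc k}"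
proof (cases "(2*k+1)*(9*k+6) + (3*k+4) \<le> x")
  case True then show ?thesis by (rule Cgen)
next
  case False
  define q r where "q = x div (9*k+6)" and "r = x mod (9*k+6)"
  have h: "HQ k q r" using H_fwd[OF assms] by (simp add: q_def r_def)
  have rb: "r < 9*k+6" by (simp add: r_def)
  have x: "x = q*(9*k+6) + r" unfolding q_def r_def by (rule div_mult_mod_eq[symmetric])
  have nc: "\<not> (2*k+1 < q \<or> (2*k+1 = q \<and> 3*k+4 \<le> r))"
  proof
    assume "2*k+1 < q \<or> (2*k+1 = q \<and> 3*k+4 \<le> r)"
    then have "(2*k+1)*(9*k+6) + (3*k+4) \<le> q*(9*k+6) + r" by (subst lex_le) (use rb in auto)
    then show False using False x by simp
  qed
  have "(q = 0 \<and> r = 0) \<or> (1 \<le> q \<and> r \<le> 3*q div 2) \<or> (1 \<le> q \<and> 3*k+4 \<le> r \<and> r \<le> 3*k+4 + 3*(q-1) div 2)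
    \<or> (6*k+5 \<le> r \<and> r \<le> 6*k+5 + 3*q div 2)" using h nc unfolding HQ_def by auto
  then show ?thesis
  proof (elim disjE conjE)
    assume "q = 0" "r = 0" then show ?thesis using x gen_0 by simp
  next
    assume "r \<le> 3*q div 2" then show ?thesis using x L1 by simp
  next
    assume "1 \<le> q" "3*k+4 \<le> r" "r \<le> 3*k+4 + 3*(q-1) div 2" then show ?thesis using x L2 by simp
  next
    assume "6*k+5 \<le> r" "r \<le> 6*k+5 + 3*q div 2" then show ?thesis using x L3 by simp
  qed
qed

lemma H_submonoid: "submonoid (H13 k)"
proof -
  define T where "T = {t. \<forall>h\<in>H13 k. h + t \<in> H13 k}"
  have "submonoid T" unfolding submonoid_def T_def by (auto simp: add.assoc[symmetric])
  moreover have "{aa k, bb k, cc k} \<subseteq> T" unfolding T_def using H_add_a H_add_b H_add_c by auto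
  ultimately have gT: "gen {aa k, bb k, cc k} \<subseteq> T" by (rule gen_least)
  have "0 \<in> H13 k" unfolding H13_def by simp
  moreover have "x + y \<in> H13 k" if "x \<in> H13 k" "y \<in> H13 k" for x y
    using H_sub_gen[OF that(2)] gT that(1) unfolding T_def by blast
  ultimately show ?thesis unfolding submonoid_def by blast
qed


definition Mf :: "nat \<Rightarrow> nat \<Rightarrow> nat" where "Mf k x = MQ k (x div (9*k+6)) (x mod (9*k+6))"

lemma P3:
  assumes h: "HQ k q r" "r < 9*k+6" "succQ k q r = (s1, s2)"
  shows "MQ k s1 s2 = (MQ k q r + 1) mod 3 \<and> (MQ k q r = 0 \<or> s2 mod 3 = (r+1) mod 3)"
proof (cases "2*k+2 \<le> q")
  case True then show ?thesis using P3_big[OF True h(2,3)] by blast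
next
  case False
  have "\<exists>i. q = 2*i \<or> q = 2*i+1" by presburger
  then obtain i where "q = 2*i \<or> q = 2*i+1" by blast
  then show ?thesis
  proof
    assume q: "q = 2*i"
    then have ik: "i \<le> k" using False by simp
    show ?thesis using P3_even[OF ik h(1)[unfolded q] h(2) h(3)[unfolded q]] unfolding q .
  next
    assume q: "q = 2*i+1"
    then have ik: "i \<le> k" using False by simp
    show ?thesis using P3_odd[OF ik h(1)[unfolded q] h(2) h(3)[unfolded q]] unfolding q .
  qed
qed

lemma xdecomp: "x = (x div (9*k+6))*(9*k+6) + x mod (9*k+6::nat)"
  by (rule div_mult_mod_eq[symmetric])

lemma mod3: "(m*(9*k+6) + u) mod 3 = u mod (3::nat)"
proof -
  have e: "m*(9*k+6) + u = u + 3*(m*(3*k+2))" by (simp add: algebra_simps)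
  show ?thesis unfolding e by (rule mod_mult_self2)
qed

lemma NEXT:
  assumes x: "x \<in> H13 k" and y: "y \<in> H13 k" and xy: "x < y" and nb: "\<forall>z\<in>H13 k. \<not>(x < z \<and> z < y)"
     and s: "succQ k (x div (9*k+6)) (x mod (9*k+6)) = (s1, s2)"
  shows "y = s1*(9*k+6) + s2"
proof -
  have rb: "x mod (9*k+6) < 9*k+6" by simp
  have h: "HQ k (x div (9*k+6)) (x mod (9*k+6))" by (rule H_fwd[OF x])
  note p1 = P1[OF h rb s]
  have zH: "s1*(9*k+6) + s2 \<in> H13 k" using p1 H_bwd by blast
  have "x < s1*(9*k+6) + s2"
    using p1 lex_less[OF rb, of s2 "x div (9*k+6)" s1] xdecomp[of x k] by auto
  then have le1: "\<not> (s1*(9*k+6) + s2 < y)" using nb zH by blast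
  have rb': "y mod (9*k+6) < 9*k+6" by simp
  have h': "HQ k (y div (9*k+6)) (y mod (9*k+6))" by (rule H_fwd[OF y])
  have "x div (9*k+6) < y div (9*k+6) \<or> (x div (9*k+6) = y div (9*k+6) \<and> x mod (9*k+6) < y mod (9*k+6))"
    using xy lex_less[OF rb rb', of "x div (9*k+6)" "y div (9*k+6)"] xdecomp[of x k] xdecomp[of y k] by simp
  from P2[OF h' rb rb' this s]
  have "s1*(9*k+6) + s2 \<le> y"
    using lex_le[of s2 "9*k+6" "y mod (9*k+6)" s1 "y div (9*k+6)"] p1 rb' xdecomp[of y k] by auto
  then show ?thesis using le1 by simp
qed

lemma NEXT_M:
  assumes x: "x \<in> H13 k" and y: "y \<in> H13 k" and xy: "x < y" and nb: "\<forall>z\<in>H13 k. \<not>(x < z \<and> z < y)"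
  shows "Mf k y = (Mf k x + 1) mod 3 \<and> (Mf k x = 0 \<or> y mod 3 = (x+1) mod 3)"
proof -
  obtain s1 s2 where s: "succQ k (x div (9*k+6)) (x mod (9*k+6)) = (s1, s2)" by (cases "succQ k (x div (9*k+6)) (x mod (9*k+6))")
  have ye: "y = s1*(9*k+6) + s2" by (rule NEXT[OF x y xy nb s])
  have rb: "x mod (9*k+6) < 9*k+6" by simp
  have h: "HQ k (x div (9*k+6)) (x mod (9*k+6))" by (rule H_fwd[OF x])
  have s2b: "s2 < 9*k+6" using P1[OF h rb s] by blast
  have yd: "y div (9*k+6) = s1" "y mod (9*k+6) = s2" using dm[OF s2b, of s1] ye by simp_all
  have ym: "y mod 3 = s2 mod 3" using ye mod3 by simp
  have xe1: "x + 1 = (x div (9*k+6))*(9*k+6) + (x mod (9*k+6) + 1)"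
    using div_mult_mod_eq[of x "9*k+6"] by linarith
  have xm: "(x + 1) mod 3 = (x mod (9*k+6) + 1) mod 3" unfolding xe1 by (rule mod3)
  show ?thesis using P3[OF h rb s] unfolding Mf_def yd ym xm .
qed

lemma H_0: "0 \<in> H13 k" unfolding H13_def by simp

lemma H_inf: "infinite (H13 k)"
proof -
  have "{2 * aa k + 2 * k * bb k ..} \<subseteq> H13 k" unfolding H13_def by auto
  then show ?thesis using infinite_Ici infinite_super by blast
qed

lemma e0: "enumerate (H13 k) 0 = 0"
  using H_0 by (simp add: enumerate_0 Least_eq_0)

lemma e_nb: "\<forall>z\<in>H13 k. \<not>(enumerate (H13 k) p < z \<and> z < enumerate (H13 k) (Suc p))"
proof (intro ballI notI)
  fix z assume z: "z \<in> H13 k" and lt: "enumerate (H13 k) p < z \<and> z < enumerate (H13 k) (Suc p)"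
  obtain j where j: "enumerate (H13 k) j = z" using enumerate_Ex[OF H_inf z] by blast
  have "p < j" "j < Suc p" using lt unfolding j[symmetric] using H_inf by auto
  then show False by simp
qed

lemma NEXT_e:
  "Mf k (enumerate (H13 k) (Suc p)) = (Mf k (enumerate (H13 k) p) + 1) mod 3 \<and>
   (Mf k (enumerate (H13 k) p) = 0 \<or> enumerate (H13 k) (Suc p) mod 3 = (enumerate (H13 k) p + 1) mod 3)"
  by (rule NEXT_M[OF enumerate_in_set[OF H_inf] enumerate_in_set[OF H_inf] enumerate_step[OF H_inf] e_nb])

lemma Mphase: "Mf k (enumerate (H13 k) p) = p mod 3"
proof (induction p)
  case 0
  show ?case unfolding e0 Mf_def MQ_def by simp
next
  case (Suc p)
  then show ?case using NEXT_e[of k p] by (simp add: mod_Suc_eq)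
qed

lemma NEXT_val:
  assumes "succQ k (enumerate (H13 k) p div (9*k+6)) (enumerate (H13 k) p mod (9*k+6)) = (s1, s2)"
  shows "enumerate (H13 k) (Suc p) = s1*(9*k+6) + s2"
  by (rule NEXT[OF enumerate_in_set[OF H_inf] enumerate_in_set[OF H_inf] enumerate_step[OF H_inf] e_nb assms])

lemma e1: "enumerate (H13 k) 1 = aa k"
proof -
  have "succQ k 0 0 = (0, 6*k+5)" by (rule succ3) (simp_all add: HQ_def)
  then have "enumerate (H13 k) (Suc 0) = 0*(9*k+6) + (6*k+5)" using NEXT_val[of k 0] e0 by simp
  then show ?thesis by (simp add: abc)
qed

lemma e2: "enumerate (H13 k) 2 = bb k"
proof -
  have d: "aa k div (9*k+6) = 0" "aa k mod (9*k+6) = 6*k+5" by (simp_all add: abc)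
  have "succQ k 0 (6*k+5) = (0+1, 0)" by (rule succ4) (simp_all add: HQ_def)
  then have "enumerate (H13 k) (Suc 1) = 1*(9*k+6) + 0" using NEXT_val[of k 1] e1 d by simp
  then show ?thesis by (simp add: abc numeral_2_eq_2)
qed

lemma e3: "enumerate (H13 k) 3 = cc k"
proof -
  have d: "bb k div (9*k+6) = 1" "bb k mod (9*k+6) = 0" by (simp_all add: abc)
  have "succQ k 1 0 = (1, 0+1)" by (rule succ1) (simp_all add: HQ_def)
  then have "enumerate (H13 k) (Suc 2) = 1*(9*k+6) + 1" using NEXT_val[of k 2] e2 d by simp
  then show ?thesis by (simp add: abc numeral_3_eq_3)
qed

lemma triple:
  "bij_betw (\<lambda>j. enumerate (H13 k) (m * 3 + j) mod 3) {1..3} {0..<3}"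
proof -
  let ?e = "enumerate (H13 k)"
  have a1: "(m*3+1) mod 3 = (1::nat)" "(m*3+2) mod 3 = (2::nat)" by presburger+
  have m1: "Mf k (?e (m*3+1)) = 1" using Mphase[of k "m*3+1"] a1 by simp
  have m2: "Mf k (?e (m*3+2)) = 2" using Mphase[of k "m*3+2"] a1 by simp
  have r2: "?e (m*3+2) mod 3 = (?e (m*3+1) + 1) mod 3" using NEXT_e[of k "m*3+1"] m1 by simp
  have s3: "Suc (m*3+2) = m*3+3" by simp
  have r3: "?e (m*3+3) mod 3 = (?e (m*3+2) + 1) mod 3" using NEXT_e[of k "m*3+2"] m2
    unfolding s3 by simp
  define \<rho> where "\<rho> = ?e (m*3+1) mod 3"
  have f1: "?e (m*3+1) mod 3 = \<rho>" by (simp add: \<rho>_def)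
  have f2: "?e (m*3+2) mod 3 = (\<rho>+1) mod 3" using r2 by (simp add: \<rho>_def mod_Suc_eq)
  have "(?e (m*3+2) + 1) mod 3 = (?e (m*3+2) mod 3 + 1) mod 3" by (rule mod_add_left_eq[symmetric])
  also have "\<dots> = ((\<rho>+1) mod 3 + 1) mod 3" by (simp only: f2)
  also have "\<dots> = (\<rho>+2) mod 3" by presburger
  finally have f3: "?e (m*3+3) mod 3 = (\<rho>+2) mod 3" using r3 by simp
  have I: "{1..3::nat} = {1,2,3}" by auto
  have "\<rho> < 3" by (simp add: \<rho>_def)
  then have "\<rho> = 0 \<or> \<rho> = 1 \<or> \<rho> = 2" by auto
  then show ?thesis
    unfolding bij_betw_def inj_on_def I using f1 f2 f3 by (elim disjE) auto
qed

theorem lemma4p13: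
  fixes k :: nat
  assumes "k \<ge> 1"
  defines "S \<equiv> {aa k, bb k, cc k}"
  defines "G \<equiv> gen S"
  shows "(submonoid (H13 k) \<and> H13 k \<subseteq> G \<and> finite (UNIV - H13 k) \<and> S \<subseteq> H13 k)
         \<and> perm_num_semigroup 3 (H13 k)"
proof -
  have sub: "submonoid (H13 k)" by (rule H_submonoid)
  have HG: "H13 k \<subseteq> G" unfolding G_def S_def using H_sub_gen by blast
  have "UNIV - H13 k \<subseteq> {..< 2 * aa k + 2 * k * bb k}" unfolding H13_def by auto
  then have fin: "finite (UNIV - H13 k)" using finite_subset by blast
  have SH: "S \<subseteq> H13 k" unfolding S_def using H_add_a[OF H_0] H_add_b[OF H_0] H_add_c[OF H_0] by simp
  have GH: "G \<subseteq> H13 k" unfolding G_def by (rule gen_least[OF sub SH])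
  have E: "{enumerate (H13 k) j | j. 1 \<le> j \<and> j \<le> 3} = S"
  proof -
    have "{j::nat. 1 \<le> j \<and> j \<le> 3} = {1,2,3}" by auto
    then have "{enumerate (H13 k) j | j. 1 \<le> j \<and> j \<le> 3} = enumerate (H13 k) ` {1,2,3}" by blast
    then show ?thesis unfolding S_def using e1 e2 e3 by simp
  qed
  have "H13 k = gen {enumerate (H13 k) j | j. 1 \<le> j \<and> j \<le> 3}"
    unfolding E using HG GH unfolding G_def by blast
  moreover have "\<forall>m. bij_betw (\<lambda>j. enumerate (H13 k) (m * 3 + j) mod 3) {1..3} {0..<3}"
    using triple by blast
  ultimately have "perm_num_semigroup 3 (H13 k)"
    unfolding perm_num_semigroup_def numerical_semigroup_def using sub fin by blast
  then show ?thesis using sub HG fin SH by blast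
qed

end
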